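(* Let $\mathcal{M}\subset\mathbb{R}^n$ be a locally symmetric $C^2$ submanifold with characteristic permutation $\sigma_*$, let $\sigma\in\Sigma^n$ with $\mathcal{M}\cap\Delta(\sigma)\neq\emptyset$, and let $\tau\in\Sigma^n$ with $P(\tau)$ refining $P(\sigma)$. Then every cycle of $\tau$ (and of $\sigma$) is contained either in $F:=\mathbb{N}_n\setminus\mathrm{supp}(\sigma_* )$ or in $\mathrm{supp}(\sigma_* )$, and, writing $\rho^F,\rho^M$ for the restrictions of $\rho\in\{\tau,\sigma,\sigma_*\}$ to $F$ and to $\mathrm{supp}(\sigma_* )$, one has: $P(\tau^F)$ refines $P(\sigma^F)$; $P(\sigma^M)=P(\sigma_*^M)$; and $P(\tau^M)$ refines $P(\sigma^M)$.
   Context: $\Sigma^n$ permutations of $\mathbb{N}_n$ acting by $(\sigma x)_i=x_{\sigma^{-1}(i)}$; $\mathrm{supp}(\sigma)$ non-fixed indices; $P(\sigma)$ partition into orbits of $\sigma$; $P(x)$ partition by equal coordinates; $\Delta(\sigma)=\{x:P(x)=P(\sigma)\}$; $P'$ refines $P$ if every set of $P$ is a union of sets of $P'$. $\mathbb{R}^n_\ge=\{x:x_1\ge\cdots\ge x_n\}$; $B$ open ball. A set $S$ is locally symmetric if $S\cap\mathbb{R}^n_\ge\ne\emptyset$ and each $x\in S$ has $\delta>0$ with $\sigma(S\cap B(x,\delta))=S\cap B(x,\delta)$ for all $y\in S\cap B(x,\delta)$, all $\sigma$ with $\sigma y=y$; a locally symmetric $C^2$ submanifold is a connected $C^2$ submanifold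 without boundary which is locally symmetric. A characteristic permutation is a $\sigma_*$ with $\mathcal{M}\cap B(y,\rho)\subset\Delta(\sigma_* )$ for some $y\in\mathcal{M}$, $\rho>0$. *)

theory Defs
  imports "HOL-Analysis.Analysis"
begin

definition pact :: "('n::finite \<Rightarrow> 'n) \<Rightarrow> real^'n \<Rightarrow> real^'n" where
  "pact \<sigma> x = (\<chi> i. x $ (inv \<sigma> i))"

definition supp :: "('n \<Rightarrow> 'n) \<Rightarrow> 'n set" where
  "supp \<sigma> = {i. \<sigma> i \<noteq> i}"

definition cyc :: "('n \<Rightarrow> 'n) \<Rightarrow> 'n \<Rightarrow> 'n set" where
  "cyc \<rho> i = {(\<rho> ^^ k) i | k. True}"

definition orbit_partition_on :: "'n set \<Rightarrow> ('n \<Rightarrow> 'n) \<Rightarrow> 'n set set" where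
  "orbit_partition_on A \<rho> = {cyc \<rho> i | i. i \<in> A}"

definition Pperm :: "('n \<Rightarrow> 'n) \<Rightarrow> 'n set set" where
  "Pperm \<sigma> = orbit_partition_on UNIV \<sigma>"

definition Pvec :: "real^'n \<Rightarrow> 'n set set" where
  "Pvec x = {{j. x $ j = x $ i} | i. True}"

definition Delta :: "('n \<Rightarrow> 'n) \<Rightarrow> (real^'n) set" where
  "Delta \<sigma> = {x. Pvec x = Pperm \<sigma>}"

definition refines :: "'n set set \<Rightarrow> 'n set set \<Rightarrow> bool" where
  "refines P' P \<longleftrightarrow> (\<forall>A\<in>P. \<exists>Q\<subseteq>P'. A = \<Union>Q)"

definition perm_restrict :: "('n \<Rightarrow> 'n) \<Rightarrow> 'n set \<Rightarrow> 'n \<Rightarrow> 'n" where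
  "perm_restrict \<rho> A = (\<lambda>i. if i \<in> A then \<rho> i else i)"

definition sorted_cone :: "(real^'n::{finite,linorder}) set" where
  "sorted_cone = {x. \<forall>i j. i \<le> j \<longrightarrow> x $ j \<le> x $ i}"

definition locally_symmetric :: "(real^'n::{finite,linorder}) set \<Rightarrow> bool" where
  "locally_symmetric S \<longleftrightarrow> S \<inter> sorted_cone \<noteq> {} \<and>
     (\<forall>x\<in>S. \<exists>\<delta>>0. \<forall>y\<in>S \<inter> ball x \<delta>. \<forall>\<sigma>. \<sigma> permutes UNIV \<and> pact \<sigma> y = y \<longrightarrow>
        pact \<sigma> ` (S \<inter> ball x \<delta>) = S \<inter> ball x \<delta>)"

definition C2_on :: "('a::euclidean_space \<Rightarrow> 'b::euclidean_space) \<Rightarrow> 'a set \<Rightarrow> bool" where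
  "C2_on f U \<longleftrightarrow> (\<exists>f' f''. (\<forall>x\<in>U. (f has_derivative blinfun_apply (f' x)) (at x) \<and>
       (f' has_derivative blinfun_apply (f'' x)) (at x)) \<and> continuous_on U f'')"

text \<open>C^2 embedded submanifold without boundary: locally straightened by a C^2 diffeomorphism
  onto a linear subspace\<close>
definition C2_submanifold :: "('a::euclidean_space) set \<Rightarrow> bool" where
  "C2_submanifold M \<longleftrightarrow> (\<forall>x\<in>M. \<exists>U (\<phi>::'a \<Rightarrow> 'a) L. open U \<and> x \<in> U \<and> C2_on \<phi> U \<and> inj_on \<phi> U \<and>
      open (\<phi> ` U) \<and> C2_on (inv_into U \<phi>) (\<phi> ` U) \<and> subspace L \<and> \<phi> ` (M \<inter> U) = L \<inter> \<phi> ` U)"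

definition locally_symmetric_C2_submanifold :: "(real^'n::{finite,linorder}) set \<Rightarrow> bool" where
  "locally_symmetric_C2_submanifold M \<longleftrightarrow> connected M \<and> C2_submanifold M \<and> locally_symmetric M"

definition characteristic_perm :: "(real^'n::{finite,linorder}) set \<Rightarrow> ('n \<Rightarrow> 'n) \<Rightarrow> bool" where
  "characteristic_perm M \<sigma> \<longleftrightarrow> \<sigma> permutes UNIV \<and>
     (\<exists>y\<in>M. \<exists>\<rho>>0. M \<inter> ball y \<rho> \<subseteq> Delta \<sigma>)"

end

theory Submission
  imports Defs
begin

lemma funpow_mult_fix:
  assumes "(p ^^ n) i = i" shows "(p ^^ (m * n)) i = i"
proof (induction m)
  case 0 then show ?case by simp
next
  case (Suc m)
  have "(p ^^ (Suc m * n)) i = (p ^^ n) ((p ^^ (m * n)) i)"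
    by (simp add: funpow_add add.commute)
  then show ?case using Suc assms by simp
qed

lemma cyc_self: "i \<in> cyc \<rho> i"
  unfolding cyc_def by (auto intro!: exI[of _ 0])

lemma cyc_sub:
  assumes "j \<in> cyc \<rho> i" shows "cyc \<rho> j \<subseteq> cyc \<rho> i"
proof
  fix x assume "x \<in> cyc \<rho> j"
  then obtain k where k: "x = (\<rho> ^^ k) j" unfolding cyc_def by auto
  from assms obtain m where m: "j = (\<rho> ^^ m) i" unfolding cyc_def by auto
  have "x = (\<rho> ^^ (k + m)) i" using k m by (simp add: funpow_add)
  then show "x \<in> cyc \<rho> i" unfolding cyc_def by auto
qed

lemma cyc_eq:
  fixes \<rho> :: "'n::finite \<Rightarrow> 'n"
  assumes "\<rho> permutes UNIV" "j \<in> cyc \<rho> i" shows "cyc \<rho> j = cyc \<rho> i"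
proof
  show "cyc \<rho> j \<subseteq> cyc \<rho> i" using cyc_sub[OF assms(2)] .
  have perm: "permutation \<rho>" unfolding permutation_permutes using assms(1) by (intro exI[of _ UNIV]) simp
  from assms(2) obtain m where m: "j = (\<rho> ^^ m) i" unfolding cyc_def by auto
  obtain n where n: "n > 0" "(\<rho> ^^ n) i = i" by (rule permutation_self[OF perm])
  have "m \<le> m * n" using n by simp
  then have e: "m * n - m + m = m * n" by simp
  have "(\<rho> ^^ (m * n - m)) j = (\<rho> ^^ (m * n - m + m)) i" using m by (simp only: funpow_add comp_apply)
  also have "\<dots> = (\<rho> ^^ (m * n)) i" by (simp only: e)
  also have "\<dots> = i" by (rule funpow_mult_fix[OF n(2)])
  finally have "i \<in> cyc \<rho> j" unfolding cyc_def by (auto intro!: exI[of _ "m * n - m"])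
  then show "cyc \<rho> i \<subseteq> cyc \<rho> j" by (rule cyc_sub)
qed

lemma cyc_restrict:
  assumes "cyc \<rho> i \<subseteq> A" shows "cyc (perm_restrict \<rho> A) i = cyc \<rho> i"
proof -
  have "((perm_restrict \<rho> A) ^^ k) i = (\<rho> ^^ k) i" for k
  proof (induction k)
    case 0 then show ?case by simp
  next
    case (Suc k)
    have "(\<rho> ^^ k) i \<in> A" using assms unfolding cyc_def by auto
    then show ?case using Suc by (simp add: perm_restrict_def)
  qed
  then show ?thesis unfolding cyc_def by simp
qed

lemma refines_restrict:
  fixes \<sigma> \<tau> :: "'n::finite \<Rightarrow> 'n"
  assumes "\<sigma> permutes UNIV" "\<tau> permutes UNIV"
    and A: "\<And>i. i \<in> A \<Longrightarrow> cyc \<sigma> i \<subseteq> A"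
    and T: "\<And>i. cyc \<tau> i \<subseteq> cyc \<sigma> i"
  shows "refines (orbit_partition_on A (perm_restrict \<tau> A)) (orbit_partition_on A (perm_restrict \<sigma> A))"
  unfolding refines_def
proof
  fix X assume "X \<in> orbit_partition_on A (perm_restrict \<sigma> A)"
  then obtain i where i: "i \<in> A" "X = cyc (perm_restrict \<sigma> A) i"
    unfolding orbit_partition_on_def by auto
  have X: "X = cyc \<sigma> i" using i cyc_restrict[OF A[OF i(1)]] by simp
  let ?Q = "{cyc \<tau> j | j. j \<in> cyc \<sigma> i}"
  have "?Q \<subseteq> orbit_partition_on A (perm_restrict \<tau> A)"
  proof
    fix Y assume "Y \<in> ?Q"
    then obtain j where j: "j \<in> cyc \<sigma> i" "Y = cyc \<tau> j" by auto
    have jA: "j \<in> A" using j A[OF i(1)] by auto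
    have "cyc \<tau> j \<subseteq> A" using T[of j] cyc_eq[OF assms(1) j(1)] A[OF i(1)] by auto
    then have "Y = cyc (perm_restrict \<tau> A) j" using j cyc_restrict by metis
    then show "Y \<in> orbit_partition_on A (perm_restrict \<tau> A)"
      unfolding orbit_partition_on_def using jA by auto
  qed
  moreover have "X = \<Union>?Q"
  proof
    show "X \<subseteq> \<Union>?Q"
    proof
      fix x assume "x \<in> X"
      then have "cyc \<tau> x \<in> ?Q" using X by auto
      moreover have "x \<in> cyc \<tau> x" by (rule cyc_self)
      ultimately show "x \<in> \<Union>?Q" by (rule UnionI)
    qed
    show "\<Union>?Q \<subseteq> X"
    proof
      fix x assume "x \<in> \<Union>?Q"
      then obtain j where j: "j \<in> cyc \<sigma> i" "x \<in> cyc \<tau> j" by auto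
      then have "x \<in> cyc \<sigma> j" using T by auto
      then show "x \<in> X" using X cyc_eq[OF assms(1) j(1)] by simp
    qed
  qed
  ultimately show "\<exists>Q\<subseteq>orbit_partition_on A (perm_restrict \<tau> A). X = \<Union> Q"
    by (intro exI[of _ ?Q] conjI)
qed

lemma pact_transpose: "pact (Transposition.transpose i j) x $ k = x $ (Transposition.transpose i j k)"
  by (simp add: pact_def)

lemma pact_diff: "pact t (x - y) = pact t x - pact t y"
  by (simp add: pact_def vec_eq_iff)

lemma norm_pact:
  fixes t :: "'n::finite \<Rightarrow> 'n"
  assumes "t permutes UNIV" shows "norm (pact t x) = norm x"
proof -
  have "(\<Sum>k\<in>UNIV. (norm (x $ inv t k))^2) = (\<Sum>k\<in>UNIV. (norm (x $ k))^2)"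
    using sum.permute[OF permutes_inv[OF assms], of "\<lambda>k. (norm (x $ k))^2"] by (simp add: comp_def)
  then show ?thesis by (simp add: norm_vec_def L2_set_def pact_def)
qed

lemma key:
  fixes M :: "(real^'n::{finite,linorder}) set" and i j :: 'n
  assumes sub: "C2_submanifold M" and ls: "locally_symmetric M" and wM: "w \<in> M"
   and approx: "\<forall>r>0. \<exists>z\<in>M. dist z w < r \<and> (\<exists>\<delta>>0. \<forall>x\<in>M \<inter> ball z \<delta>. x$i = x$j)"
  shows "\<exists>\<delta>>0. \<forall>x\<in>M \<inter> ball w \<delta>. x$i = x$j"
proof (cases "i = j")
  case True then show ?thesis by (intro exI[of _ 1]) auto
next
  case ij: False
  define t where "t = Transposition.transpose i j"
  have tp: "t permutes UNIV" by (simp add: t_def permutes_swap_id)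
  have pt: "pact t x $ k = x $ t k" for x k by (simp add: t_def pact_transpose)
  have wij: "w$i = w$j"
  proof (rule ccontr)
    assume ne: "w$i \<noteq> w$j"
    define d where "d = \<bar>w$i - w$j\<bar>"
    have d: "d > 0" using ne by (simp add: d_def)
    obtain z \<delta> where z: "z \<in> M" "dist z w < d/2" "\<delta> > 0" "\<forall>x\<in>M \<inter> ball z \<delta>. x$i = x$j"
      using approx d by (meson half_gt_zero)
    have zij: "z$i = z$j" using z by auto
    have "\<bar>(w - z)$i\<bar> \<le> norm (w - z)" "\<bar>(w - z)$j\<bar> \<le> norm (w - z)"
      by (rule component_le_norm_cart)+
    moreover have "norm (w - z) < d/2" using z(2) by (simp add: dist_norm norm_minus_commute)
    ultimately show False using zij by (simp add: d_def)
  qed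
  have ptw: "pact t w = w"
    unfolding vec_eq_iff pt by (simp add: t_def Transposition.transpose_def wij)
  obtain \<delta>0 where \<delta>0: "\<delta>0 > 0" and
    sym0: "\<forall>y\<in>M \<inter> ball w \<delta>0. \<forall>\<sigma>. \<sigma> permutes UNIV \<and> pact \<sigma> y = y \<longrightarrow>
        pact \<sigma> ` (M \<inter> ball w \<delta>0) = M \<inter> ball w \<delta>0"
    using conjunct2[OF ls[unfolded locally_symmetric_def], rule_format, OF wM] by (elim exE conjE) blast
  have sym: "pact t x \<in> M \<inter> ball w \<delta>0" if "x \<in> M \<inter> ball w \<delta>0" for x
  proof -
    have "w \<in> M \<inter> ball w \<delta>0" using wM \<delta>0 by simp
    then have "pact t ` (M \<inter> ball w \<delta>0) = M \<inter> ball w \<delta>0" using sym0[rule_format, OF _ conjI[OF tp ptw]] by simp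
    then show ?thesis using that by blast
  qed
  obtain U and \<phi> :: "(real, 'n) vec \<Rightarrow> (real, 'n) vec" and L where
    U: "open U" "w \<in> U" and C2phi: "C2_on \<phi> U" and inj: "inj_on \<phi> U" and oU: "open (\<phi> ` U)"
    and C2psi: "C2_on (inv_into U \<phi>) (\<phi> ` U)" and L: "subspace L" and Meq: "\<phi> ` (M \<inter> U) = L \<inter> \<phi> ` U"
    using sub[unfolded C2_submanifold_def, rule_format, OF wM] by (elim exE conjE) blast
  define \<psi> where "\<psi> = inv_into U \<phi>"
  obtain \<phi>' \<phi>'' where dphi: "\<And>x. x\<in>U \<Longrightarrow> (\<phi> has_derivative blinfun_apply (\<phi>' x)) (at x)"
    and dphi2: "\<And>x. x\<in>U \<Longrightarrow> (\<phi>' has_derivative blinfun_apply (\<phi>'' x)) (at x)"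
    using C2phi unfolding C2_on_def by (elim exE conjE) blast
  obtain \<psi>' \<psi>'' where dpsi: "\<And>x. x\<in>\<phi>`U \<Longrightarrow> (\<psi> has_derivative blinfun_apply (\<psi>' x)) (at x)"
    and dpsi2: "\<And>x. x\<in>\<phi>`U \<Longrightarrow> (\<psi>' has_derivative blinfun_apply (\<psi>'' x)) (at x)"
    using C2psi unfolding C2_on_def \<psi>_def[symmetric] by (elim exE conjE) blast
  have psiphi: "\<psi> (\<phi> x) = x" if "x \<in> U" for x using inj that by (simp add: \<psi>_def)
  have phipsi: "\<phi> (\<psi> s) = s" if "s \<in> \<phi>`U" for s using that by (simp add: \<psi>_def f_inv_into_f)
  have psiU: "\<psi> s \<in> U" if "s \<in> \<phi>`U" for s using that by (simp add: \<psi>_def inv_into_into)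
  have cphi': "isCont \<phi>' w" using has_derivative_continuous[OF dphi2[OF U(2)]] .
  obtain ra where ra: "ra > 0" "\<forall>y. dist y w < ra \<longrightarrow> dist (\<phi>' y) (\<phi>' w) < 1"
    using cphi'[unfolded continuous_at_eps_delta] by (meson zero_less_one)
  obtain rb where rb: "rb > 0" "ball w rb \<subseteq> U" using U open_contains_ball by blast
  define r1 where "r1 = min ra rb"
  have r1: "r1 > 0" "ball w r1 \<subseteq> U" using ra rb by (auto simp: r1_def)
  define K where "K = norm (\<phi>' w) + 1"
  have K: "K > 0" by (simp add: K_def add_nonneg_pos)
  have Lip: "norm (\<phi> x - \<phi> x') \<le> K * norm (x - x')" if "x \<in> ball w r1" "x' \<in> ball w r1" for x x'
  proof (rule differentiable_bound[OF convex_ball _ _ that])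
    fix y assume y: "y \<in> ball w r1"
    then have "y \<in> U" using r1 by auto
    then show "(\<phi> has_derivative blinfun_apply (\<phi>' y)) (at y within ball w r1)"
      using dphi has_derivative_at_withinI by blast
    have "dist y w < ra" using y by (auto simp: r1_def dist_commute)
    then have "dist (\<phi>' y) (\<phi>' w) < 1" using ra by auto
    then have "norm (\<phi>' y) \<le> K" unfolding K_def dist_norm
      using norm_triangle_ineq2[of "\<phi>' y" "\<phi>' w"] by linarith
    then show "onorm (blinfun_apply (\<phi>' y)) \<le> K" by (simp add: norm_blinfun.rep_eq)
  qed
  define p where "p = \<phi> w"
  have pU: "p \<in> \<phi>`U" using U by (simp add: p_def)
  define \<epsilon> where "\<epsilon> = 1 / (2 * K)"
  have \<epsilon>: "\<epsilon> > 0" "\<epsilon> * K = 1/2" using K by (auto simp: \<epsilon>_def)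
  have cpsi': "isCont \<psi>' p" using has_derivative_continuous[OF dpsi2[OF pU]] .
  obtain rc where rc: "rc > 0" "\<forall>s. dist s p < rc \<longrightarrow> dist (\<psi>' s) (\<psi>' p) < \<epsilon>/2"
    using cpsi'[unfolded continuous_at_eps_delta] \<epsilon> by (meson half_gt_zero)
  obtain rd where rd: "rd > 0" "ball p rd \<subseteq> \<phi>`U" using pU oU open_contains_ball by blast
  define r2 where "r2 = min rc rd"
  have r2: "r2 > 0" "ball p r2 \<subseteq> \<phi>`U" using rc rd by (auto simp: r2_def)
  have r2c: "dist (\<psi>' s) (\<psi>' p) < \<epsilon>/2" if "s \<in> ball p r2" for s
    using that rc by (auto simp: r2_def dist_commute)
  have cphi: "isCont \<phi> w" using has_derivative_continuous[OF dphi[OF U(2)]] .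
  obtain d3 where d3: "d3 > 0" "\<forall>x. dist x w < d3 \<longrightarrow> dist (\<phi> x) p < r2"
    using cphi[unfolded continuous_at_eps_delta] r2 unfolding p_def by blast
  define \<delta>1 where "\<delta>1 = min \<delta>0 (min r1 d3)"
  have \<delta>1: "\<delta>1 > 0" using \<delta>0 r1 d3 by (simp add: \<delta>1_def)
  obtain z \<delta>z where z: "z \<in> M" "dist z w < \<delta>1" "\<delta>z > 0" "\<forall>x\<in>M \<inter> ball z \<delta>z. x$i = x$j"
    using approx \<delta>1 by meson
  have zU: "z \<in> U" using z(2) r1 by (auto simp: \<delta>1_def dist_commute)
  define q where "q = \<phi> z"
  have qU: "q \<in> \<phi>`U" using zU by (simp add: q_def)
  have qL: "q \<in> L" using Meq z(1) zU unfolding q_def by blast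
  have qb: "q \<in> ball p r2" using d3 z(2) by (auto simp: q_def \<delta>1_def dist_commute)
  have psiq: "\<psi> q = z" using psiphi[OF zU] by (simp add: q_def)
  define D where "D = \<psi>' q"
  have Dl: "(blinfun_apply D l)$i = (blinfun_apply D l)$j" if lL: "l \<in> L" for l
  proof -
    define g where "g \<tau> = (\<psi> (q + \<tau> *\<^sub>R l))$i - (\<psi> (q + \<tau> *\<^sub>R l))$j" for \<tau> :: real
    have h1: "((\<lambda>\<tau>. q + \<tau> *\<^sub>R l) has_derivative (\<lambda>\<tau>. \<tau> *\<^sub>R l)) (at 0)"
      by (auto intro!: derivative_eq_intros)
    have "(\<psi> has_derivative blinfun_apply D) (at ((\<lambda>\<tau>. q + \<tau> *\<^sub>R l) 0))"
      using dpsi[OF qU] by (simp add: D_def)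
    from has_derivative_compose[OF h1 this]
    have h2: "((\<lambda>\<tau>. \<psi> (q + \<tau> *\<^sub>R l)) has_derivative (\<lambda>\<tau>. blinfun_apply D (\<tau> *\<^sub>R l))) (at 0)" .
    have bl: "bounded_linear (\<lambda>v::(real,'n) vec. v$i - v$j)"
      by (intro bounded_linear_sub bounded_linear_vec_nth)
    have h3: "(g has_derivative (\<lambda>\<tau>. (blinfun_apply D (\<tau> *\<^sub>R l))$i - (blinfun_apply D (\<tau> *\<^sub>R l))$j)) (at 0)"
      unfolding g_def using bounded_linear.has_derivative[OF bl h2] .
    have cont: "isCont (\<lambda>\<tau>. \<psi> (q + \<tau> *\<^sub>R l)) 0" using has_derivative_continuous[OF h2] .
    obtain e1 where e1: "e1 > 0" "\<forall>\<tau>. dist \<tau> 0 < e1 \<longrightarrow> dist (\<psi> (q + \<tau> *\<^sub>R l)) (\<psi> (q + 0 *\<^sub>R l)) < \<delta>z"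
      using cont[unfolded continuous_at_eps_delta] z(3) by blast
    obtain rq where rq: "rq > 0" "ball q rq \<subseteq> \<phi>`U" using qU oU open_contains_ball by blast
    define e where "e = min e1 (rq / (norm l + 1))"
    have e: "e > 0" using e1 rq by (simp add: e_def add_nonneg_pos)
    have g0: "g \<tau> = 0" if "\<tau> \<in> ball 0 e" for \<tau>
    proof -
      have t1: "\<bar>\<tau>\<bar> < e1" "\<bar>\<tau>\<bar> < rq / (norm l + 1)" using that by (auto simp: e_def dist_real_def)
      have "\<bar>\<tau>\<bar> * (norm l + 1) < rq" using t1(2) by (simp add: pos_less_divide_eq add_nonneg_pos)
      moreover have "\<bar>\<tau>\<bar> * norm l \<le> \<bar>\<tau>\<bar> * (norm l + 1)" by (simp add: mult_left_mono)
      ultimately have "norm (\<tau> *\<^sub>R l) < rq" by simp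
      then have "q + \<tau> *\<^sub>R l \<in> ball q rq" by (simp add: dist_norm)
      then have in1: "q + \<tau> *\<^sub>R l \<in> \<phi>`U" using rq by blast
      have in2: "q + \<tau> *\<^sub>R l \<in> L" using L qL lL by (simp add: subspace_add subspace_scale)
      have "q + \<tau> *\<^sub>R l \<in> \<phi> ` (M \<inter> U)" using in1 in2 Meq by blast
      then obtain m where m: "m \<in> M" "m \<in> U" "q + \<tau> *\<^sub>R l = \<phi> m" by blast
      have psim: "\<psi> (q + \<tau> *\<^sub>R l) = m" using m psiphi by simp
      have "dist (\<psi> (q + \<tau> *\<^sub>R l)) z < \<delta>z" using e1(2) t1(1) psiq by (simp add: dist_real_def)
      then have "m \<in> M \<inter> ball z \<delta>z" using m psim by (simp add: dist_commute)
      then have "m$i = m$j" using z(4) by blast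
      then show ?thesis using psim by (simp add: g_def)
    qed
    have h4: "(g has_derivative (\<lambda>_. 0)) (at 0)"
    proof (rule has_derivative_transform_within_open[where f="\<lambda>_. 0" and s="ball 0 e"])
      show "((\<lambda>_. 0::real) has_derivative (\<lambda>_. 0)) (at 0)" by simp
      show "open (ball (0::real) e)" by simp
      show "(0::real) \<in> ball 0 e" using e by simp
      show "\<And>x. x \<in> ball 0 e \<Longrightarrow> 0 = g x" using g0 by simp
    qed
    have "(\<lambda>\<tau>. (blinfun_apply D (\<tau> *\<^sub>R l))$i - (blinfun_apply D (\<tau> *\<^sub>R l))$j) = (\<lambda>_. 0)"
      using has_derivative_unique[OF h3 h4] .
    from fun_cong[OF this, of 1] show ?thesis by simp
  qed
  have main: "x$i = x$j" if xM: "x \<in> M" and xb: "x \<in> ball w \<delta>1" for x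
  proof -
    define x' where "x' = pact t x"
    have xb0: "x \<in> M \<inter> ball w \<delta>0" using xM xb by (auto simp: \<delta>1_def)
    have x'M: "x' \<in> M" using sym[OF xb0] by (simp add: x'_def)
    have "w - x' = pact t (w - x)" by (simp add: x'_def pact_diff ptw)
    then have "dist w x' = dist w x" by (simp add: dist_norm norm_pact[OF tp])
    then have x'b: "x' \<in> ball w \<delta>1" using xb by simp
    have in1: "y \<in> ball w r1" "dist (\<phi> y) p < r2" "y \<in> U" if "y \<in> ball w \<delta>1" for y
      using that d3 r1 by (auto simp: \<delta>1_def dist_commute)
    define s where "s = \<phi> x"
    define s' where "s' = \<phi> x'"
    have sL: "s \<in> L" using Meq xM in1(3)[OF xb] unfolding s_def by blast
    have s'L: "s' \<in> L" using Meq x'M in1(3)[OF x'b] unfolding s'_def by blast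
    have sb: "s \<in> ball p r2" "s' \<in> ball p r2"
      using in1(2)[OF xb] in1(2)[OF x'b] by (auto simp: s_def s'_def dist_commute)
    have psis: "\<psi> s = x" "\<psi> s' = x'"
      using psiphi in1(3)[OF xb] in1(3)[OF x'b] by (auto simp: s_def s'_def)
    have lin: "norm (\<psi> s - \<psi> s' - blinfun_apply (\<psi>' q) (s - s')) \<le> norm (s - s') * \<epsilon>"
    proof (rule differentiable_bound_linearization[where S = "ball p r2" and f' = "\<lambda>y. blinfun_apply (\<psi>' y)"])
      fix \<tau> :: real assume "\<tau> \<in> {0..1}"
      then have "(1 - \<tau>) *\<^sub>R s' + \<tau> *\<^sub>R s \<in> ball p r2"
        using sb convex_ball[of p r2] unfolding convex_alt by auto
      moreover have "s' + \<tau> *\<^sub>R (s - s') = (1 - \<tau>) *\<^sub>R s' + \<tau> *\<^sub>R s" by (simp add: algebra_simps)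
      ultimately show "s' + \<tau> *\<^sub>R (s - s') \<in> ball p r2" by simp
    next
      fix y assume "y \<in> ball p r2"
      then have "y \<in> \<phi>`U" using r2 by blast
      then show "(\<psi> has_derivative blinfun_apply (\<psi>' y)) (at y within ball p r2)"
        using dpsi has_derivative_at_withinI by blast
    next
      fix y assume y: "y \<in> ball p r2"
      have eq: "blinfun_apply (\<psi>' y) - blinfun_apply (\<psi>' q) = blinfun_apply (\<psi>' y - \<psi>' q)"
        by (simp add: minus_blinfun.rep_eq fun_diff_def)
      have "norm (\<psi>' y - \<psi>' q) \<le> dist (\<psi>' y) (\<psi>' p) + dist (\<psi>' q) (\<psi>' p)"
        using dist_triangle2[of "\<psi>' y" "\<psi>' q" "\<psi>' p"] by (simp add: dist_norm)
      also have "\<dots> < \<epsilon>" using r2c[OF y] r2c[OF qb] by simp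
      finally show "onorm (blinfun_apply (\<psi>' y) - blinfun_apply (\<psi>' q)) \<le> \<epsilon>"
        unfolding eq by (simp add: norm_blinfun.rep_eq[symmetric])
    next
      show "q \<in> ball p r2" by (rule qb)
    qed
    have DV: "(blinfun_apply D (s - s'))$i = (blinfun_apply D (s - s'))$j"
      using Dl L sL s'L by (simp add: subspace_diff)
    have lip: "norm (s - s') \<le> K * norm (x - x')"
      unfolding s_def s'_def using Lip in1(1)[OF xb] in1(1)[OF x'b] by blast
    define a where "a = x$i - x$j"
    define u :: "(real,'n) vec" where "u = axis i 1 - axis j 1"
    have xx': "x - x' = a *\<^sub>R u"
      unfolding vec_eq_iff
    proof
      fix k
      show "(x - x') $ k = (a *\<^sub>R u) $ k"
        using ij by (cases "k = i"; cases "k = j")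
          (auto simp: x'_def t_def pact_transpose Transposition.transpose_def a_def u_def axis_def)
    qed
    have uD: "inner u (blinfun_apply D (s - s')) = 0"
      using DV by (simp add: u_def inner_diff_left inner_axis')
    define e where "e = x - x' - blinfun_apply D (s - s')"
    have "(norm (x - x'))^2 = inner (x - x') (x - x')" by (simp add: power2_norm_eq_inner)
    also have "\<dots> = inner (x - x') (blinfun_apply D (s - s')) + inner (x - x') e"
      by (simp add: e_def inner_diff_right)
    also have "inner (x - x') (blinfun_apply D (s - s')) = 0" using uD xx' by simp
    finally have sq: "(norm (x - x'))^2 = inner (x - x') e" by simp
    have ne: "norm e \<le> \<epsilon> * K * norm (x - x')"
    proof -
      have "norm e \<le> norm (s - s') * \<epsilon>" using lin psis by (simp add: e_def D_def)
      also have "\<dots> \<le> K * norm (x - x') * \<epsilon>" using lip \<epsilon> by (simp add: mult_right_mono)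
      finally show ?thesis by (simp add: algebra_simps)
    qed
    have "(norm (x - x'))^2 \<le> norm (x - x') * norm e" using sq norm_cauchy_schwarz by metis
    also have "\<dots> \<le> norm (x - x') * (\<epsilon> * K * norm (x - x'))" by (rule mult_left_mono[OF ne norm_ge_zero])
    also have "\<dots> = (norm (x - x'))^2 / 2" using \<epsilon>(2) by (simp add: power2_eq_square)
    finally have "norm (x - x') = 0" by simp
    then have "x' = x" by simp
    then have "x$i = x' $ i" by simp
    also have "\<dots> = x$j" by (simp add: x'_def t_def pact_transpose)
    finally show ?thesis .
  qed
  show ?thesis using \<delta>1 main by (intro exI[of _ \<delta>1]) auto
qed

lemma Delta_same:
  assumes "x \<in> Delta \<sigma>" "j \<in> cyc \<sigma> i" shows "x$j = x$i"
proof -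
  have "cyc \<sigma> i \<in> Pperm \<sigma>" unfolding Pperm_def orbit_partition_on_def by auto
  then have "cyc \<sigma> i \<in> Pvec x" using assms(1) by (simp add: Delta_def)
  then obtain m where m: "cyc \<sigma> i = {k. x$k = x$m}" unfolding Pvec_def by auto
  have "i \<in> cyc \<sigma> i" by (rule cyc_self)
  then show ?thesis using m assms(2) by auto
qed

lemma Delta_diff:
  fixes \<sigma> :: "'n::finite \<Rightarrow> 'n"
  assumes "\<sigma> permutes UNIV" "x \<in> Delta \<sigma>" "x$j = x$i" shows "j \<in> cyc \<sigma> i"
proof -
  have "{k. x$k = x$i} \<in> Pvec x" unfolding Pvec_def by auto
  then have "{k. x$k = x$i} \<in> Pperm \<sigma>" using assms(2) by (simp add: Delta_def)
  then obtain m where m: "{k. x$k = x$i} = cyc \<sigma> m" unfolding Pperm_def orbit_partition_on_def by auto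
  have "i \<in> cyc \<sigma> m" using m by blast
  then have "cyc \<sigma> m = cyc \<sigma> i" using cyc_eq[OF assms(1)] by metis
  then show ?thesis using m assms(3) by blast
qed

lemma clopen_Om:
  fixes M :: "(real^'n::{finite,linorder}) set" and i j :: 'n
  assumes "locally_symmetric_C2_submanifold M"
  shows "{x\<in>M. \<exists>\<delta>>0. \<forall>x'\<in>M \<inter> ball x \<delta>. x'$i = x'$j} = {} \<or>
         {x\<in>M. \<exists>\<delta>>0. \<forall>x'\<in>M \<inter> ball x \<delta>. x'$i = x'$j} = M"
proof -
  define Om where "Om = {x\<in>M. \<exists>\<delta>>0. \<forall>x'\<in>M \<inter> ball x \<delta>. x'$i = x'$j}"
  have sub: "C2_submanifold M" and ls: "locally_symmetric M" and con: "connected M"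
    using assms unfolding locally_symmetric_C2_submanifold_def by auto
  have op: "openin (top_of_set M) Om"
    unfolding openin_euclidean_subtopology_iff
  proof (intro conjI ballI)
    show "Om \<subseteq> M" by (auto simp: Om_def)
    fix x assume "x \<in> Om"
    then obtain \<delta> where \<delta>: "\<delta> > 0" "\<forall>x'\<in>M \<inter> ball x \<delta>. x'$i = x'$j" by (auto simp: Om_def)
    have "x' \<in> Om" if "x' \<in> M" "dist x' x < \<delta>/2" for x'
    proof -
      have "\<forall>y\<in>M \<inter> ball x' (\<delta>/2). y$i = y$j"
      proof
        fix y assume y: "y \<in> M \<inter> ball x' (\<delta>/2)"
        have "dist x y \<le> dist x x' + dist x' y" by (rule dist_triangle)
        then have "dist x y < \<delta>" using y that by (simp add: dist_commute)
        then show "y$i = y$j" using \<delta> y by auto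
      qed
      then show ?thesis using that \<delta> by (auto simp: Om_def intro!: exI[of _ "\<delta>/2"])
    qed
    then show "\<exists>e>0. \<forall>x'\<in>M. dist x' x < e \<longrightarrow> x' \<in> Om" using \<delta> by (intro exI[of _ "\<delta>/2"]) auto
  qed
  have cl: "closedin (top_of_set M) Om"
    unfolding closedin_def
  proof (intro conjI)
    show "Om \<subseteq> topspace (top_of_set M)" by (auto simp: Om_def)
    show "openin (top_of_set M) (topspace (top_of_set M) - Om)"
      unfolding openin_euclidean_subtopology_iff topspace_euclidean_subtopology
    proof (intro conjI ballI)
      show "M - Om \<subseteq> M" by blast
      fix w assume w: "w \<in> M - Om"
      have "\<not> (\<forall>r>0. \<exists>z\<in>M. dist z w < r \<and> (\<exists>\<delta>>0. \<forall>x\<in>M \<inter> ball z \<delta>. x$i = x$j))"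
      proof
        assume "\<forall>r>0. \<exists>z\<in>M. dist z w < r \<and> (\<exists>\<delta>>0. \<forall>x\<in>M \<inter> ball z \<delta>. x$i = x$j)"
        from key[OF sub ls _ this] w have "w \<in> Om" by (auto simp: Om_def)
        then show False using w by blast
      qed
      then obtain r where r: "r > 0" "\<forall>z\<in>M. dist z w < r \<longrightarrow> \<not> (\<exists>\<delta>>0. \<forall>x\<in>M \<inter> ball z \<delta>. x$i = x$j)"
        by blast
      show "\<exists>e>0. \<forall>x'\<in>M. dist x' w < e \<longrightarrow> x' \<in> M - Om"
        using r by (intro exI[of _ r]) (auto simp: Om_def)
    qed
  qed
  show ?thesis using con op cl unfolding connected_clopen Om_def[symmetric] by blast
qed

lemma fix_cyc: "\<rho> j = j \<Longrightarrow> cyc \<rho> j = {j}"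
proof -
  assume a: "\<rho> j = j"
  have "(\<rho> ^^ k) j = j" for k by (induction k) (simp_all add: a)
  then show ?thesis unfolding cyc_def by auto
qed

theorem proposition3p32:
  fixes M :: "(real^'n::{finite,linorder}) set"
    and \<sigma>s \<sigma> \<tau> :: "'n \<Rightarrow> 'n"
  assumes "locally_symmetric_C2_submanifold M"
    and "characteristic_perm M \<sigma>s"
    and "\<sigma> permutes UNIV" and "M \<inter> Delta \<sigma> \<noteq> {}"
    and "\<tau> permutes UNIV" and "refines (Pperm \<tau>) (Pperm \<sigma>)"
  defines "F \<equiv> UNIV - supp \<sigma>s"
  defines "S \<equiv> supp \<sigma>s"
  shows "(\<forall>C\<in>Pperm \<tau>. C \<subseteq> F \<or> C \<subseteq> S) \<and> (\<forall>C\<in>Pperm \<sigma>. C \<subseteq> F \<or> C \<subseteq> S)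
    \<and> refines (orbit_partition_on F (perm_restrict \<tau> F)) (orbit_partition_on F (perm_restrict \<sigma> F))
    \<and> orbit_partition_on S (perm_restrict \<sigma> S) = orbit_partition_on S (perm_restrict \<sigma>s S)
    \<and> refines (orbit_partition_on S (perm_restrict \<tau> S)) (orbit_partition_on S (perm_restrict \<sigma> S))"
proof -
  have sub: "C2_submanifold M" and ls: "locally_symmetric M"
    using assms(1) unfolding locally_symmetric_C2_submanifold_def by auto
  have \<sigma>sp: "\<sigma>s permutes UNIV" using assms(2) unfolding characteristic_perm_def by blast
  obtain y \<rho> where y: "y \<in> M" "\<rho> > 0" "M \<inter> ball y \<rho> \<subseteq> Delta \<sigma>s"
    using assms(2) unfolding characteristic_perm_def by blast
  have yD: "y \<in> Delta \<sigma>s" using y by auto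
  define Om where "Om i j = {x\<in>M. \<exists>\<delta>>0. \<forall>x'\<in>M \<inter> ball x \<delta>. x'$i = x'$j}" for i j
  have clo: "Om i j = {} \<or> Om i j = M" for i j unfolding Om_def by (rule clopen_Om[OF assms(1)])
  have F1: "x$j = x$i" if xM: "x \<in> M" and ji: "j \<in> cyc \<sigma>s i" for x i j
  proof -
    have "\<forall>x'\<in>M \<inter> ball y \<rho>. x'$i = x'$j" using y Delta_same[OF _ ji] by fastforce
    then have "y \<in> Om i j" using y by (auto simp: Om_def)
    then have "Om i j = M" using clo by blast
    then have "x \<in> Om i j" using xM by simp
    then obtain \<delta> where "\<delta> > 0" "\<forall>x'\<in>M \<inter> ball x \<delta>. x'$i = x'$j" by (auto simp: Om_def)
    then show ?thesis using xM by auto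
  qed
  have F2: "Om i j = {}" if nj: "j \<notin> cyc \<sigma>s i" for i j
  proof (rule ccontr)
    assume "Om i j \<noteq> {}"
    then have "y \<in> Om i j" using clo y by blast
    then obtain \<delta> where "\<delta> > 0" "\<forall>x'\<in>M \<inter> ball y \<delta>. x'$i = x'$j" by (auto simp: Om_def)
    then have "y$j = y$i" using y by auto
    then show False using Delta_diff[OF \<sigma>sp yD] nj by blast
  qed
  obtain x0 where x0: "x0 \<in> M" "x0 \<in> Delta \<sigma>" using assms(4) by blast
  have lev: "j \<in> cyc \<sigma> i \<longleftrightarrow> x0$j = x0$i" for i j
    using Delta_same[OF x0(2)] Delta_diff[OF assms(3) x0(2)] by blast
  have claimC: "k \<in> cyc \<sigma>s c" if cm: "\<sigma>s c \<noteq> c" and kc: "x0$k = x0$c" for c k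
  proof (rule ccontr)
    assume nk: "k \<notin> cyc \<sigma>s c"
    have ck: "c \<noteq> k" using nk cyc_self by metis
    have sc: "\<sigma>s c \<in> cyc \<sigma>s c" unfolding cyc_def by (auto intro!: exI[of _ 1])
    have sck: "\<sigma>s c \<noteq> k" using nk sc by auto
    define t where "t = Transposition.transpose c k"
    have tp: "t permutes UNIV" by (simp add: t_def permutes_swap_id)
    have ptx0: "pact t x0 = x0"
      unfolding vec_eq_iff t_def pact_transpose using kc by (simp add: Transposition.transpose_def)
    obtain \<delta>0 where \<delta>0: "\<delta>0 > 0" and
      sym0: "\<forall>y\<in>M \<inter> ball x0 \<delta>0. \<forall>\<sigma>. \<sigma> permutes UNIV \<and> pact \<sigma> y = y \<longrightarrow>
          pact \<sigma> ` (M \<inter> ball x0 \<delta>0) = M \<inter> ball x0 \<delta>0"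
      using conjunct2[OF ls[unfolded locally_symmetric_def], rule_format, OF x0(1)] by (elim exE conjE) blast
    have "x0 \<in> M \<inter> ball x0 \<delta>0" using x0 \<delta>0 by simp
    then have inv: "pact t ` (M \<inter> ball x0 \<delta>0) = M \<inter> ball x0 \<delta>0"
      using sym0[rule_format, OF _ conjI[OF tp ptx0]] by simp
    have "\<forall>x\<in>M \<inter> ball x0 \<delta>0. x$c = x$k"
    proof
      fix x assume xb: "x \<in> M \<inter> ball x0 \<delta>0"
      then have "pact t x \<in> M" using inv by blast
      then have "(pact t x)$(\<sigma>s c) = (pact t x)$c" using F1 sc by blast
      then have "x$(\<sigma>s c) = x$k" using cm sck ck
        by (simp add: t_def pact_transpose Transposition.transpose_def)
      moreover have "x$(\<sigma>s c) = x$c" using F1 sc xb by blast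
      ultimately show "x$c = x$k" by simp
    qed
    then have "x0 \<in> Om c k" using x0 \<delta>0 by (auto simp: Om_def)
    then show False using F2[OF nk] by blast
  qed
  have Sm: "c \<in> S \<longleftrightarrow> \<sigma>s c \<noteq> c" for c by (simp add: S_def supp_def)
  have SC: "cyc \<sigma> c = cyc \<sigma>s c" if cS: "c \<in> S" for c
  proof
    show "cyc \<sigma> c \<subseteq> cyc \<sigma>s c"
    proof
      fix j assume "j \<in> cyc \<sigma> c"
      then have "x0$j = x0$c" using lev by blast
      then show "j \<in> cyc \<sigma>s c" using claimC cS Sm by blast
    qed
    show "cyc \<sigma>s c \<subseteq> cyc \<sigma> c"
    proof
      fix j assume "j \<in> cyc \<sigma>s c"
      then have "x0$j = x0$c" using F1 x0(1) by blast
      then show "j \<in> cyc \<sigma> c" using lev by blast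
    qed
  qed
  have SS: "cyc \<sigma>s c \<subseteq> S" if cS: "c \<in> S" for c
  proof
    fix j assume j: "j \<in> cyc \<sigma>s c"
    show "j \<in> S"
    proof (rule ccontr)
      assume "j \<notin> S"
      then have "\<sigma>s j = j" using Sm by blast
      then have "cyc \<sigma>s j = {j}" by (rule fix_cyc)
      moreover have "cyc \<sigma>s j = cyc \<sigma>s c" using cyc_eq[OF \<sigma>sp j] .
      moreover have "\<sigma>s c \<in> cyc \<sigma>s c" unfolding cyc_def by (auto intro!: exI[of _ 1])
      moreover have "c \<in> cyc \<sigma>s c" by (rule cyc_self)
      ultimately have "\<sigma>s c = c" by simp
      then show False using cS Sm by blast
    qed
  qed
  have SF: "cyc \<sigma> i \<subseteq> F \<or> cyc \<sigma> i \<subseteq> S" for i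
  proof (cases "\<exists>c\<in>cyc \<sigma> i. c \<in> S")
    case True
    then obtain c where c: "c \<in> cyc \<sigma> i" "c \<in> S" by blast
    have "cyc \<sigma> i = cyc \<sigma> c" using cyc_eq[OF assms(3) c(1)] by simp
    then show ?thesis using SC[OF c(2)] SS[OF c(2)] by simp
  next
    case False
    then show ?thesis by (auto simp: F_def S_def)
  qed
  have TS: "cyc \<tau> i \<subseteq> cyc \<sigma> i" for i
  proof -
    have "cyc \<sigma> i \<in> Pperm \<sigma>" unfolding Pperm_def orbit_partition_on_def by auto
    then obtain Q where Q: "Q \<subseteq> Pperm \<tau>" "cyc \<sigma> i = \<Union>Q"
      using assms(6) unfolding refines_def by blast
    have "i \<in> \<Union>Q" using Q(2) cyc_self by metis
    then obtain Y where Y: "Y \<in> Q" "i \<in> Y" by blast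
    then obtain m where m: "Y = cyc \<tau> m" using Q(1) unfolding Pperm_def orbit_partition_on_def by auto
    have "cyc \<tau> i = Y" using cyc_eq[OF assms(5)] Y(2) m by metis
    then show ?thesis using Y Q(2) by blast
  qed
  have g1: "\<forall>C\<in>Pperm \<tau>. C \<subseteq> F \<or> C \<subseteq> S"
  proof
    fix C assume "C \<in> Pperm \<tau>"
    then obtain i where "C = cyc \<tau> i" unfolding Pperm_def orbit_partition_on_def by auto
    then show "C \<subseteq> F \<or> C \<subseteq> S" using TS[of i] SF[of i] by blast
  qed
  have g2: "\<forall>C\<in>Pperm \<sigma>. C \<subseteq> F \<or> C \<subseteq> S"
  proof
    fix C assume "C \<in> Pperm \<sigma>"
    then obtain i where "C = cyc \<sigma> i" unfolding Pperm_def orbit_partition_on_def by auto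
    then show "C \<subseteq> F \<or> C \<subseteq> S" using SF[of i] by blast
  qed
  have FF: "cyc \<sigma> i \<subseteq> F" if iF: "i \<in> F" for i
  proof -
    have "i \<notin> S" using iF by (simp add: F_def S_def)
    then have "\<not> cyc \<sigma> i \<subseteq> S" using cyc_self[of i \<sigma>] by blast
    then show ?thesis using SF by blast
  qed
  have g3: "refines (orbit_partition_on F (perm_restrict \<tau> F)) (orbit_partition_on F (perm_restrict \<sigma> F))"
    by (rule refines_restrict[OF assms(3) assms(5) FF TS])
  have SSig: "cyc \<sigma> i \<subseteq> S" if "i \<in> S" for i using SC[OF that] SS[OF that] by simp
  have g5: "refines (orbit_partition_on S (perm_restrict \<tau> S)) (orbit_partition_on S (perm_restrict \<sigma> S))"
    by (rule refines_restrict[OF assms(3) assms(5) SSig TS])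
  have eqc: "cyc (perm_restrict \<sigma> S) i = cyc (perm_restrict \<sigma>s S) i" if "i \<in> S" for i
    using cyc_restrict[OF SSig[OF that]] cyc_restrict[OF SS[OF that]] SC[OF that] by simp
  have g4: "orbit_partition_on S (perm_restrict \<sigma> S) = orbit_partition_on S (perm_restrict \<sigma>s S)"
    unfolding orbit_partition_on_def using eqc by force
  show ?thesis using g1 g2 g3 g4 g5 by blast
qed

end
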